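(* Under the standing assumptions below, for every $t>0$ one has $\mathbb P\big(\{\zeta_t=1\}\,\Delta\,\{\tau\le t\}\big)=0$. Consequently $\tau$ is a stopping time with respect to $\mathbb F^{\zeta,c}$, and hence also with respect to $\mathbb F^{\zeta,c}_+$.
   Context: $(\Omega,\mathcal F,\mathbb P)$ is a complete probability space with null sets $\mathcal N_P$. $\gamma=(\gamma_t,t\ge0)$ is a standard gamma process (driftless subordinator, $\gamma_0=0$, càdlàg, $\mathbb E[e^{-\lambda\gamma_t}]=(1+\lambda)^{-t}$). $\tau:\Omega\to(0,+\infty)$ is a strictly positive random variable, independent of $\gamma$, with distribution function $F(t)=\mathbb P(\tau\le t)$ and law $\mathbb P_\tau$. The gamma bridge with random length $\tau$ is $\zeta_t:=\gamma_{t\wedge\tau}/\gamma_\tau$, $t\ge0$. $\Delta$ is symmetric difference. For a process $Y$: $\mathcal F^Y_t=\sigma(Y_s,s\le t)$, $\mathcal F^{Y,c}_t=\mathcal F^Y_t\vee\mathcal N_P$, and $\mathbb F^{Y,c}_+=(\bigcap_{s>t}\mathcal F^{Y,c}_s)_{t\ge0}$. *)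

theory Defs
  imports "HOL-Probability.Probability"
begin

definition gamma_process :: "'a measure \<Rightarrow> (real \<Rightarrow> 'a \<Rightarrow> real) \<Rightarrow> bool" where
  "gamma_process M g \<longleftrightarrow>
     (\<forall>t\<ge>0. g t \<in> borel_measurable M) \<and>
     (\<forall>\<omega>\<in>space M. g 0 \<omega> = 0) \<and>
     (\<forall>\<omega>\<in>space M. mono_on {0..} (\<lambda>s. g s \<omega>)) \<and>
     (\<forall>\<omega>\<in>space M. \<forall>t\<ge>0. ((\<lambda>s. g s \<omega>) \<longlongrightarrow> g t \<omega>) (at_right t)) \<and>
     (\<forall>\<omega>\<in>space M. \<forall>t>0. \<exists>l. ((\<lambda>s. g s \<omega>) \<longlongrightarrow> l) (at_left t)) \<and>
     (\<forall>(n::nat) (ts::nat \<Rightarrow> real). 0 \<le> ts 0 \<and> (\<forall>i<n. ts i < ts (Suc i)) \<longrightarrow>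
        prob_space.indep_vars M (\<lambda>_. borel) (\<lambda>i \<omega>. g (ts (Suc i)) \<omega> - g (ts i) \<omega>) {..<n}) \<and>
     (\<forall>s t l. 0 \<le> s \<and> s \<le> t \<and> 0 \<le> l \<longrightarrow>
        prob_space.expectation M (\<lambda>\<omega>. exp (- l * (g t \<omega> - g s \<omega>))) = (1 + l) powr (- (t - s)))"

definition gamma_bridge :: "(real \<Rightarrow> 'a \<Rightarrow> real) \<Rightarrow> ('a \<Rightarrow> real) \<Rightarrow> real \<Rightarrow> 'a \<Rightarrow> real" where
  "gamma_bridge g \<tau> t \<omega> = g (min t (\<tau> \<omega>)) \<omega> / g (\<tau> \<omega>) \<omega>"

text \<open>Completed natural filtration F^{Y,c}_t = sigma(Y_s, 0 <= s <= t) v N_P.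
  (For t < 0 the generating family of Y-events is empty.)\<close>
definition completed_nat_filtration :: "'a measure \<Rightarrow> (real \<Rightarrow> 'a \<Rightarrow> real) \<Rightarrow> real \<Rightarrow> 'a measure" where
  "completed_nat_filtration M Y t =
     sigma (space M) ((\<Union>s\<in>{0..t}. {Y s -` B \<inter> space M | B. B \<in> sets borel}) \<union> null_sets M)"

definition completed_nat_filtration_plus :: "'a measure \<Rightarrow> (real \<Rightarrow> 'a \<Rightarrow> real) \<Rightarrow> real \<Rightarrow> 'a measure" where
  "completed_nat_filtration_plus M Y t =
     sigma (space M) (\<Inter>s\<in>{t<..}. sets (completed_nat_filtration M Y s))"

end

theory Submission
  imports Defs "HOL-Real_Asymp.Real_Asymp"
begin

lemma incr_null:
  assumes P: "prob_space M" and G: "gamma_process M g" and s: "0 \<le> s" "s < u"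
  shows "{\<omega>\<in>space M. g u \<omega> = g s \<omega>} \<in> null_sets M"
proof -
  interpret prob_space M by fact
  define A where "A = {\<omega>\<in>space M. g u \<omega> = g s \<omega>}"
  have mg: "g u \<in> borel_measurable M" "g s \<in> borel_measurable M" using G s unfolding gamma_process_def by auto
  have A: "A \<in> sets M" unfolding A_def using mg by measurable
  have mono: "\<And>\<omega>. \<omega> \<in> space M \<Longrightarrow> g s \<omega> \<le> g u \<omega>" using G s unfolding gamma_process_def mono_on_def by auto
  have bnd: "\<And>l. 0 \<le> l \<Longrightarrow> measure M A \<le> (1 + l) powr (- (u - s))"
  proof -
    fix l :: real assume l: "0 \<le> l"
    have E: "expectation (\<lambda>\<omega>. exp (- l * (g u \<omega> - g s \<omega>))) = (1 + l) powr (- (u - s))"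
      using G s l unfolding gamma_process_def by auto
    have int: "integrable M (\<lambda>\<omega>. exp (- l * (g u \<omega> - g s \<omega>)))"
    proof (rule integrable_const_bound[where B=1])
      show "AE x in M. norm (exp (- l * (g u x - g s x))) \<le> 1"
        using mono l by (intro AE_I2) (auto simp: mult_nonneg_nonneg)
    qed (use mg in measurable)
    have "measure M A = expectation (indicator A)" using A by simp
    also have "\<dots> \<le> expectation (\<lambda>\<omega>. exp (- l * (g u \<omega> - g s \<omega>)))"
      by (rule integral_mono[OF _ int]) (use A in \<open>auto simp: indicator_def A_def intro!: integrable_real_indicator simp: less_top[symmetric]\<close>)
    finally show "measure M A \<le> (1 + l) powr (- (u - s))" using E by simp
  qed
  have lim: "((\<lambda>l::real. (1 + l) powr (- (u - s))) \<longlongrightarrow> 0) at_top" using s by real_asymp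
  have "measure M A \<le> 0"
    by (rule tendsto_le[OF _ lim tendsto_const]) (use bnd in \<open>auto intro!: eventually_mono[OF eventually_ge_at_top[of 0]]\<close>)
  hence "measure M A = 0" using measure_nonneg[of M A] by linarith
  have "emeasure M A = ennreal (measure M A)" by (rule emeasure_eq_measure)
  hence "emeasure M A = 0" using \<open>measure M A = 0\<close> by (simp only: ennreal_0)
  thus ?thesis using A unfolding A_def by (rule null_setsI)
qed

lemma main_null:
  assumes P: "prob_space M" and C: "complete_measure M" and G: "gamma_process M g"
    and tpos: "\<forall>\<omega>\<in>space M. 0 < \<tau> \<omega>" and t: "0 < t"
  shows "({\<omega>\<in>space M. gamma_bridge g \<tau> t \<omega> = 1} - {\<omega>\<in>space M. \<tau> \<omega> \<le> t}) \<union>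
            ({\<omega>\<in>space M. \<tau> \<omega> \<le> t} - {\<omega>\<in>space M. gamma_bridge g \<tau> t \<omega> = 1}) \<in> null_sets M"
    (is "?D \<in> _")
proof -
  interpret complete_measure M by fact
  define N1 where "N1 = (\<Union>n::nat. {\<omega>\<in>space M. g (1 / real (Suc n)) \<omega> = g 0 \<omega>})"
  define N2 where "N2 = (\<Union>q::rat. if t < real_of_rat q then {\<omega>\<in>space M. g (real_of_rat q) \<omega> = g t \<omega>} else {})"
  have N1: "N1 \<in> null_sets M" unfolding N1_def
    by (intro null_sets_UN incr_null[OF P G]) auto
  have N2: "N2 \<in> null_sets M" unfolding N2_def
    using t by (intro null_sets_UN) (auto intro: incr_null[OF P G])
  have g0: "\<And>\<omega>. \<omega> \<in> space M \<Longrightarrow> g 0 \<omega> = 0" using G unfolding gamma_process_def by auto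
  have mono: "\<And>\<omega> a b. \<omega> \<in> space M \<Longrightarrow> 0 \<le> a \<Longrightarrow> a \<le> b \<Longrightarrow> g a \<omega> \<le> g b \<omega>"
    using G unfolding gamma_process_def mono_on_def by auto
  have sub: "?D \<subseteq> N1 \<union> N2"
  proof
    fix \<omega> assume w: "\<omega> \<in> ?D"
    hence sp: "\<omega> \<in> space M" by auto
    have tp: "0 < \<tau> \<omega>" using tpos sp by auto
    show "\<omega> \<in> N1 \<union> N2"
    proof (cases "\<tau> \<omega> \<le> t")
      case True
      hence "gamma_bridge g \<tau> t \<omega> \<noteq> 1" using w by auto
      hence z: "g (\<tau> \<omega>) \<omega> = 0" using True by (auto simp: gamma_bridge_def min_def split: if_splits)
      obtain n where n: "1 / real (Suc n) < \<tau> \<omega>"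
        using tp reals_Archimedean by (metis inverse_eq_divide)
      have "g 0 \<omega> \<le> g (1 / real (Suc n)) \<omega>" by (rule mono[OF sp]) auto
      moreover have "g (1 / real (Suc n)) \<omega> \<le> g (\<tau> \<omega>) \<omega>" by (rule mono[OF sp]) (use n in auto)
      ultimately have "g (1 / real (Suc n)) \<omega> = g 0 \<omega>" using z g0[OF sp] by auto
      thus ?thesis unfolding N1_def using sp by auto
    next
      case False
      hence "gamma_bridge g \<tau> t \<omega> = 1" using w by auto
      hence e: "g t \<omega> = g (\<tau> \<omega>) \<omega>" using False
        by (auto simp: gamma_bridge_def min_def split: if_splits)
      obtain r where r: "t < of_rat r" "of_rat r < \<tau> \<omega>" using of_rat_dense False by (metis not_le)
      have "g t \<omega> \<le> g (of_rat r) \<omega>" by (rule mono[OF sp]) (use t r in linarith)+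
      moreover have "g (of_rat r) \<omega> \<le> g (\<tau> \<omega>) \<omega>" by (rule mono[OF sp]) (use t r in linarith)+
      ultimately have "g (of_rat r) \<omega> = g t \<omega>" using e by auto
      thus ?thesis unfolding N2_def using sp r by (auto intro!: exI[of _ r])
    qed
  qed
  have "?D \<in> sets M" by (rule complete[OF sub]) (use N1 N2 in auto)
  thus ?thesis using null_sets_subset[OF null_sets.Un[OF N1 N2] _ sub] by blast
qed

theorem mainTheorem4:
  fixes M :: "'a measure" and g :: "real \<Rightarrow> 'a \<Rightarrow> real" and \<tau> :: "'a \<Rightarrow> real"
  assumes "prob_space M"
    and "complete_measure M"
    and "gamma_process M g"
    and "\<tau> \<in> borel_measurable M"
    and "\<forall>\<omega>\<in>space M. 0 < \<tau> \<omega>"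
    and "prob_space.indep_set M (sets (vimage_algebra (space M) \<tau> borel))
         (sets (vimage_algebra (space M) (\<lambda>\<omega>. restrict (\<lambda>t. g t \<omega>) {0..}) (PiM {0..} (\<lambda>_. borel))))"
  shows "(\<forall>t>0.
            ({\<omega>\<in>space M. gamma_bridge g \<tau> t \<omega> = 1} - {\<omega>\<in>space M. \<tau> \<omega> \<le> t}) \<union>
            ({\<omega>\<in>space M. \<tau> \<omega> \<le> t} - {\<omega>\<in>space M. gamma_bridge g \<tau> t \<omega> = 1}) \<in> null_sets M)
       \<and> stopping_time (completed_nat_filtration M (gamma_bridge g \<tau>)) \<tau>
       \<and> stopping_time (completed_nat_filtration_plus M (gamma_bridge g \<tau>)) \<tau>"
  proof -
  define Z where "Z = gamma_bridge g \<tau>"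
  define F where "F = completed_nat_filtration M Z"
  define gens where "gens t = (\<Union>s\<in>{0..t}. {Z s -` B \<inter> space M | B. B \<in> sets borel}) \<union> null_sets M" for t
  have gP: "gens t \<subseteq> Pow (space M)" for t
    unfolding gens_def using sets.sets_into_space by auto
  have sF: "sets (F t) = sigma_sets (space M) (gens t)" for t
    unfolding F_def completed_nat_filtration_def gens_def[symmetric]
    by (rule sets_measure_of[OF gP])
  have spF: "space (F t) = space M" for t
    unfolding F_def completed_nat_filtration_def by (simp add: space_measure_of_conv)
  have monoF: "t \<le> s \<Longrightarrow> sets (F t) \<subseteq> sets (F s)" for t s
    unfolding sF by (rule sigma_sets_mono') (force simp: gens_def)
  have nul: "\<forall>t>0.
            ({\<omega>\<in>space M. gamma_bridge g \<tau> t \<omega> = 1} - {\<omega>\<in>space M. \<tau> \<omega> \<le> t}) \<union>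
            ({\<omega>\<in>space M. \<tau> \<omega> \<le> t} - {\<omega>\<in>space M. gamma_bridge g \<tau> t \<omega> = 1}) \<in> null_sets M"
    using main_null[OF assms(1,2,3,5)] by blast
  have key: "{\<omega>\<in>space M. \<tau> \<omega> \<le> t} \<in> sets (F t)" for t
  proof (cases "0 < t")
    case False
    hence eq: "{\<omega>\<in>space M. \<tau> \<omega> \<le> t} = {}" using assms(5) by force
    show ?thesis unfolding eq by (rule sets.empty_sets)
  next
    case True
    interpret complete_measure M by fact
    define Zs where "Zs = {\<omega>\<in>space M. Z t \<omega> = 1}"
    define T where "T = {\<omega>\<in>space M. \<tau> \<omega> \<le> t}"
    have D: "(Zs - T) \<union> (T - Zs) \<in> null_sets M" using nul True unfolding Zs_def T_def Z_def by blast
    have D1: "Zs - T \<in> null_sets M"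
      by (rule null_sets_subset[OF D complete[of _ "(Zs - T) \<union> (T - Zs)"]]) (use D in auto)
    have D2: "T - Zs \<in> null_sets M"
      by (rule null_sets_subset[OF D complete[of _ "(Zs - T) \<union> (T - Zs)"]]) (use D in auto)
    have "Zs = Z t -` {1} \<inter> space M" unfolding Zs_def by auto
    hence "Zs \<in> {Z t -` B \<inter> space M | B. B \<in> sets borel}" by (intro CollectI exI[of _ "{1}"]) simp
    hence "Zs \<in> (\<Union>s\<in>{0..t}. {Z s -` B \<inter> space M | B. B \<in> sets borel})"
      using True by (intro UN_I[of t]) auto
    hence Zg: "Zs \<in> gens t" unfolding gens_def by (rule UnI1)
    have eq: "T = (Zs - (Zs - T)) \<union> (T - Zs)" unfolding Zs_def T_def by auto
    have b1: "Zs \<in> sets (F t)" unfolding sF using Zg by (rule sigma_sets.Basic)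
    have b2: "Zs - T \<in> sets (F t)" unfolding sF unfolding gens_def by (intro sigma_sets.Basic UnI2 D1)
    have b3: "T - Zs \<in> sets (F t)" unfolding sF unfolding gens_def by (intro sigma_sets.Basic UnI2 D2)
    have "(Zs - (Zs - T)) \<union> (T - Zs) \<in> sets (F t)" by (rule sets.Un[OF sets.Diff[OF b1 b2] b3])
    hence "T \<in> sets (F t)" by (simp only: eq[symmetric])
    thus ?thesis unfolding T_def .
  qed
  have st1: "stopping_time F \<tau>"
    unfolding stopping_time_def pred_def spF using key by auto
  have st2: "stopping_time (completed_nat_filtration_plus M Z) \<tau>"
    unfolding stopping_time_def pred_def
  proof
    fix t
    have I: "(\<Inter>s\<in>{t<..}. sets (F s)) \<subseteq> Pow (space M)"
    proof -
      have "(\<Inter>s\<in>{t<..}. sets (F s)) \<subseteq> sets (F (t+1))" by auto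
      also have "\<dots> \<subseteq> Pow (space M)" using sets.sets_into_space[of _ "F (t+1)"] spF by blast
      finally show ?thesis .
    qed
    have "{\<omega>\<in>space M. \<tau> \<omega> \<le> t} \<in> (\<Inter>s\<in>{t<..}. sets (F s))"
    proof (rule INT_I)
      fix s assume "s \<in> {t<..}"
      hence ts: "t \<le> s" by simp
      show "{\<omega>\<in>space M. \<tau> \<omega> \<le> t} \<in> sets (F s)" by (rule subsetD[OF monoF[OF ts] key])
    qed
    hence "{\<omega>\<in>space M. \<tau> \<omega> \<le> t} \<in> sigma_sets (space M) (\<Inter>s\<in>{t<..}. sets (F s))"
      by (rule sigma_sets.Basic)
    thus "{x \<in> space (completed_nat_filtration_plus M Z t). \<tau> x \<le> t} \<in> sets (completed_nat_filtration_plus M Z t)"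
      unfolding completed_nat_filtration_plus_def F_def[symmetric]
      using sets_measure_of[OF I] by (simp add: space_measure_of_conv)
  qed
  show ?thesis using nul st1 st2 unfolding F_def Z_def by blast
qed

end
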